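(* Under the hypotheses of Proposition 1 — namely $\boldsymbol{S}\in\mathrm{Mat}(M,M,\mathbb{C})$ invertible, $\boldsymbol{U}\in\mathrm{Mat}(m,M,\mathbb{C})$, $\boldsymbol{V}\in\mathrm{Mat}(M,m,\mathbb{C})$, $\boldsymbol{K}$ satisfying $\boldsymbol{S}\boldsymbol{K}+\boldsymbol{K}\boldsymbol{S}=\boldsymbol{V}\boldsymbol{U}$, $\boldsymbol{\Xi}=e^{-\boldsymbol{S}x-\boldsymbol{S}^{-1}y}$, $p_0$ a constant $m\times m$ matrix (or a function of $x$ only), and $$q=\boldsymbol{U}\boldsymbol{\Xi}\,(\boldsymbol{I}_M+(\boldsymbol{K}\boldsymbol{\Xi})^2)^{-1}\boldsymbol{V},\qquad p=p_0-\boldsymbol{U}\boldsymbol{\Xi}\boldsymbol{K}\boldsymbol{\Xi}\,(\boldsymbol{I}_M+(\boldsymbol{K}\boldsymbol{\Xi})^2)^{-1}\boldsymbol{V}$$ on an open set where $\boldsymbol{I}_M+(\boldsymbol{K}\boldsymbol{\Xi})^2$ is invertible — the identity $$(q_y)^2+(p_y)^2=p_y$$ holds (as an identity of $m\times m$ matrix functions).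
   Context: Subscripts $x,y$ denote partial derivatives with respect to the real variables $x,y$; $\boldsymbol{I}_M$ is the $M\times M$ identity matrix. *)

theory Defs
  imports "HOL-Analysis.Analysis"
begin

primrec mat_pow :: "complex^'n^'n \<Rightarrow> nat \<Rightarrow> complex^'n^'n" where
  "mat_pow A 0 = mat 1"
| "mat_pow A (Suc k) = A ** mat_pow A k"

definition mat_exp :: "complex^'n^'n \<Rightarrow> complex^'n^'n" where
  "mat_exp A = (\<Sum>k. (1 / fact k) *\<^sub>R mat_pow A k)"

end

theory Submission
  imports Defs
begin


lemma matrix_add_rdistrib': "((A + B) ** C) = (A ** C) + (B ** C)"
  by (vector matrix_matrix_mult_def sum.distrib[symmetric] field_simps)

lemma bilinear_mm: "bilinear ((**) :: complex^'n^'m \<Rightarrow> complex^'k^'n \<Rightarrow> complex^'k^'m)"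
  unfolding bilinear_def linear_iff
  by (auto simp: matrix_add_ldistrib matrix_add_rdistrib' matrix_scalar_ac scalar_matrix_assoc)

lemma bb_mm: "bounded_bilinear ((**) :: complex^'n^'m \<Rightarrow> complex^'k^'n \<Rightarrow> complex^'k^'m)"
  using bilinear_mm bilinear_conv_bounded_bilinear by blast

lemma minv_right: "invertible (A::complex^'n^'n) \<Longrightarrow> A ** matrix_inv A = mat 1"
  unfolding invertible_def matrix_inv_def by (rule someI2_ex) auto
lemma minv_left: "invertible (A::complex^'n^'n) \<Longrightarrow> matrix_inv A ** A = mat 1"
  unfolding invertible_def matrix_inv_def by (rule someI2_ex) auto

lemma vd_from_quot:
  fixes f :: "real \<Rightarrow> 'a::real_normed_vector"
  assumes "((\<lambda>t. (f t - f y) /\<^sub>R (t - y)) \<longlongrightarrow> D) (at y)"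
  shows "(f has_vector_derivative D) (at y)"
  unfolding has_vector_derivative_def has_derivative_iff_norm
proof (intro conjI)
  show "bounded_linear (\<lambda>x. x *\<^sub>R D)" by (rule bounded_linear_scaleR_left)
  have "((\<lambda>t. norm ((f t - f y) /\<^sub>R (t - y) - D)) \<longlongrightarrow> 0) (at y)"
    using assms by (simp add: tendsto_norm_zero_iff LIM_zero_iff)
  moreover have "\<forall>\<^sub>F t in at y. norm ((f t - f y) /\<^sub>R (t - y) - D) = norm (f t - f y - (t - y) *\<^sub>R D) / norm (t - y)"
  proof -
    have "\<forall>\<^sub>F t in at y. t \<noteq> y" by (simp add: eventually_at_filter)
    then show ?thesis
    proof (rule eventually_mono)
    fix t assume "t \<noteq> y"
    then have "inverse (t - y) *\<^sub>R ((t - y) *\<^sub>R D) = D" by simp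
    then have "(f t - f y) /\<^sub>R (t - y) - D = inverse (t - y) *\<^sub>R (f t - f y - (t - y) *\<^sub>R D)"
      by (simp only: scaleR_diff_right)
    then show "norm ((f t - f y) /\<^sub>R (t - y) - D) = norm (f t - f y - (t - y) *\<^sub>R D) / norm (t - y)"
      by (simp add: divide_inverse mult.commute)
  qed
  qed
  ultimately show "((\<lambda>t. norm (f t - f y - (t - y) *\<^sub>R D) / norm (t - y)) \<longlongrightarrow> 0) (at y)"
    using Lim_transform_eventually by fastforce
qed



lemma quot_norm_eq:
  fixes f :: "real \<Rightarrow> 'a::real_normed_vector"
  assumes "t \<noteq> y"
  shows "norm ((f t - f y) /\<^sub>R (t - y) - D) = norm (f t - f y - (t - y) *\<^sub>R D) / norm (t - y)"
proof -
  have "inverse (t - y) *\<^sub>R ((t - y) *\<^sub>R D) = D" using assms by simp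
  then have "(f t - f y) /\<^sub>R (t - y) - D = inverse (t - y) *\<^sub>R (f t - f y - (t - y) *\<^sub>R D)"
    by (simp only: scaleR_diff_right)
  then show ?thesis by (simp add: divide_inverse mult.commute)
qed

lemma quot_from_vd:
  fixes f :: "real \<Rightarrow> 'a::real_normed_vector"
  assumes "(f has_vector_derivative D) (at y)"
  shows "((\<lambda>t. (f t - f y) /\<^sub>R (t - y)) \<longlongrightarrow> D) (at y)"
proof -
  have "((\<lambda>t. norm (f t - f y - (t - y) *\<^sub>R D) / norm (t - y)) \<longlongrightarrow> 0) (at y)"
    using assms unfolding has_vector_derivative_def has_derivative_iff_norm by blast
  moreover have "\<forall>\<^sub>F t in at y. norm (f t - f y - (t - y) *\<^sub>R D) / norm (t - y) = norm ((f t - f y) /\<^sub>R (t - y) - D)"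
  proof -
    have "\<forall>\<^sub>F t in at y. t \<noteq> y" by (simp add: eventually_at_filter)
    then show ?thesis by (rule eventually_mono) (simp add: quot_norm_eq)
  qed
  ultimately have "((\<lambda>t. norm ((f t - f y) /\<^sub>R (t - y) - D)) \<longlongrightarrow> 0) (at y)"
    using Lim_transform_eventually by fastforce
  then show ?thesis by (simp add: tendsto_norm_zero_iff LIM_zero_iff)
qed

lemma inv_vd:
  fixes F :: "real \<Rightarrow> complex^'n^'n"
  assumes dF: "(F has_vector_derivative F') (at y)"
    and inv: "\<forall>\<^sub>F t in nhds y. invertible (F t)"
  shows "((\<lambda>t. matrix_inv (F t)) has_vector_derivative - (matrix_inv (F y) ** F' ** matrix_inv (F y))) (at y)"
proof -
  define G where "G t = matrix_inv (F t)" for t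
  obtain K where K: "K > 0" "\<And>(a::complex^'n^'n) (b::complex^'n^'n). norm (a ** b) \<le> norm a * norm b * K"
    using bounded_bilinear.pos_bounded[OF bb_mm] by blast
  have invy: "invertible (F y)" using inv eventually_nhds_x_imp_x by blast
  have inva: "\<forall>\<^sub>F t in at y. invertible (F t)" using inv eventually_nhds_conv_at by blast
  have diff: "G t - G y = G t ** (F y - F t) ** G y" if "invertible (F t)" for t
  proof -
    have "G t ** (F y - F t) ** G y = G t ** F y ** G y - G t ** F t ** G y"
      by (simp add: bounded_bilinear.diff_right[OF bb_mm] bounded_bilinear.diff_left[OF bb_mm])
    also have "\<dots> = G t - G y"
      using that invy unfolding G_def
      by (simp add: minv_left minv_right flip: matrix_mul_assoc)
    finally show ?thesis by simp
  qed
  have contF: "(F \<longlongrightarrow> F y) (at y)"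
    using has_vector_derivative_continuous[OF dF] by (simp add: continuous_at)
  define c where "c = 1 / (2 * K * K * (norm (G y) + 1))"
  have cpos: "c > 0" using K by (simp add: c_def add_nonneg_pos)
  have ev1: "\<forall>\<^sub>F t in at y. norm (F t - F y) < c"
    using tendstoD[OF contF cpos] by (simp add: dist_norm)
  have key: "norm (G t - G y) \<le> norm (G t) * (norm (F t - F y) * K * K * norm (G y))"
    if "invertible (F t)" for t
  proof -
    have "norm (G t - G y) = norm (G t ** (F y - F t) ** G y)" using diff[OF that] by simp
    also have "\<dots> \<le> norm (G t ** (F y - F t)) * norm (G y) * K" by (rule K(2))
    also have "\<dots> \<le> (norm (G t) * norm (F y - F t) * K) * norm (G y) * K"
      using K(1) by (intro mult_right_mono K(2)) auto
    finally show ?thesis by (simp add: norm_minus_commute mult_ac)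
  qed
  have bnd: "\<forall>\<^sub>F t in at y. norm (G t) \<le> 2 * norm (G y)"
    using ev1 inva
  proof eventually_elim
    case (elim t)
    have "norm (F t - F y) * K * K * norm (G y) \<le> c * K * K * (norm (G y) + 1)"
      using elim K(1) cpos by (intro mult_mono) auto
    also have "\<dots> = 1/2"
    proof -
      have "2 * norm (G y) + 2 \<noteq> 0" using norm_ge_zero[of "G y"] by linarith
      then show ?thesis using K(1) by (simp add: c_def)
    qed
    finally have h: "norm (F t - F y) * K * K * norm (G y) \<le> 1/2" .
    have "norm (G t) \<le> norm (G y) + norm (G t - G y)" by (rule norm_triangle_sub)
    also have "\<dots> \<le> norm (G y) + norm (G t) * (1/2)"
      using key[OF elim(2)] mult_left_mono[OF h, of "norm (G t)"] by simp
    finally show ?case by simp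
  qed
  have limG: "(G \<longlongrightarrow> G y) (at y)"
  proof -
    have z: "((\<lambda>t. 2 * norm (G y) * (norm (F t - F y) * K * K * norm (G y))) \<longlongrightarrow> 0) (at y)"
    proof -
      have "((\<lambda>t. norm (F t - F y)) \<longlongrightarrow> 0) (at y)"
        using contF by (simp add: tendsto_norm_zero_iff LIM_zero_iff)
      then show ?thesis by (auto intro!: tendsto_mult_right_zero tendsto_mult_left_zero)
    qed
    have "\<forall>\<^sub>F t in at y. norm (G t - G y) \<le> 2 * norm (G y) * (norm (F t - F y) * K * K * norm (G y))"
      using bnd inva
    proof eventually_elim
      case (elim t)
      have "0 \<le> norm (F t - F y) * K * K * norm (G y)" using K(1) by simp
      then show ?case using key[OF elim(2)] mult_right_mono[OF elim(1)] by (meson order.trans)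
    qed
    from Lim_null_comparison[OF this z] show ?thesis by (simp add: LIM_zero_iff)
  qed
  have qF: "((\<lambda>t. (F t - F y) /\<^sub>R (t - y)) \<longlongrightarrow> F') (at y)" by (rule quot_from_vd[OF dF])
  have lim2: "((\<lambda>t. - (G t ** ((F t - F y) /\<^sub>R (t - y)) ** G y)) \<longlongrightarrow> - (G y ** F' ** G y)) (at y)"
    by (intro tendsto_minus bounded_bilinear.tendsto[OF bb_mm] limG qF tendsto_const)
  have "\<forall>\<^sub>F t in at y. - (G t ** ((F t - F y) /\<^sub>R (t - y)) ** G y) = (G t - G y) /\<^sub>R (t - y)"
    using inva
  proof eventually_elim
    case (elim t)
    have e1: "F y - F t = - (F t - F y)" by simp
    have e2: "G t ** (F y - F t) ** G y = - (G t ** (F t - F y) ** G y)"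
      unfolding e1 by (simp only: bounded_bilinear.minus_right[OF bb_mm] bounded_bilinear.minus_left[OF bb_mm])
    have e3: "(G t ** (F t - F y) ** G y) /\<^sub>R (t - y) = G t ** ((F t - F y) /\<^sub>R (t - y)) ** G y"
      by (simp only: bounded_bilinear.scaleR_right[OF bb_mm] bounded_bilinear.scaleR_left[OF bb_mm])
    have "(G t - G y) /\<^sub>R (t - y) = (G t ** (F y - F t) ** G y) /\<^sub>R (t - y)" by (simp only: diff[OF elim])
    also have "\<dots> = - ((G t ** (F t - F y) ** G y) /\<^sub>R (t - y))" by (simp only: e2 scaleR_minus_right)
    also have "\<dots> = - (G t ** ((F t - F y) /\<^sub>R (t - y)) ** G y)" by (simp only: e3)
    finally show ?case by simp
  qed
  then have "((\<lambda>t. (G t - G y) /\<^sub>R (t - y)) \<longlongrightarrow> - (G y ** F' ** G y)) (at y)"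
    using lim2 Lim_transform_eventually by fastforce
  then show ?thesis unfolding G_def by (rule vd_from_quot)
qed



lemma vd_series:
  fixes f f' :: "nat \<Rightarrow> real \<Rightarrow> 'a::banach"
  assumes S: "convex S" "open S"
    and der: "\<And>n t. t \<in> S \<Longrightarrow> (f n has_vector_derivative f' n t) (at t)"
    and ul: "uniform_limit S (\<lambda>n t. \<Sum>i<n. f' i t) g' sequentially"
    and x0: "x0 \<in> S" "summable (\<lambda>n. f n x0)"
    and t: "t \<in> S"
  shows "((\<lambda>t. \<Sum>n. f n t) has_vector_derivative g' t) (at t)"
proof -
  have "\<exists>g. \<forall>x\<in>S. (\<lambda>n. f n x) sums (g x) \<and> (g has_derivative (\<lambda>h. h *\<^sub>R g' x)) (at x within S)"
  proof (rule has_derivative_series[where f' = "\<lambda>n x h. h *\<^sub>R f' n x"])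
    show "convex S" by (rule S)
    show "\<And>n x. x \<in> S \<Longrightarrow> (f n has_derivative (\<lambda>h. h *\<^sub>R f' n x)) (at x within S)"
      using der has_vector_derivative_def has_derivative_at_withinI by blast
    show "\<forall>\<^sub>F n in sequentially. \<forall>x\<in>S. \<forall>h. norm ((\<Sum>i<n. h *\<^sub>R f' i x) - h *\<^sub>R g' x) \<le> e * norm h"
      if "e > 0" for e
    proof -
      from ul that have "\<forall>\<^sub>F n in sequentially. \<forall>x\<in>S. dist (\<Sum>i<n. f' i x) (g' x) < e"
        unfolding uniform_limit_iff by blast
      then show ?thesis
      proof (rule eventually_mono)
        fix n assume H: "\<forall>x\<in>S. dist (\<Sum>i<n. f' i x) (g' x) < e"
        show "\<forall>x\<in>S. \<forall>h. norm ((\<Sum>i<n. h *\<^sub>R f' i x) - h *\<^sub>R g' x) \<le> e * norm h"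
        proof (intro ballI allI)
          fix x h assume "x \<in> S"
          then have d: "norm ((\<Sum>i<n. f' i x) - g' x) \<le> e" using H by (simp add: dist_norm less_imp_le)
          have "(\<Sum>i<n. h *\<^sub>R f' i x) - h *\<^sub>R g' x = h *\<^sub>R ((\<Sum>i<n. f' i x) - g' x)"
            by (simp add: scaleR_sum_right scaleR_diff_right)
          then have "norm ((\<Sum>i<n. h *\<^sub>R f' i x) - h *\<^sub>R g' x) = norm h * norm ((\<Sum>i<n. f' i x) - g' x)"
            by simp
          also have "\<dots> \<le> norm h * e" using d by (intro mult_left_mono) auto
          finally show "norm ((\<Sum>i<n. h *\<^sub>R f' i x) - h *\<^sub>R g' x) \<le> e * norm h" by (simp add: mult.commute)
        qed
      qed
    qed
    show "x0 \<in> S" by (rule x0)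
    show "(\<lambda>n. f n x0) sums (suminf (\<lambda>n. f n x0))" using x0 by (simp add: summable_sums)
  qed
  then obtain g where g: "\<And>x. x \<in> S \<Longrightarrow> (\<lambda>n. f n x) sums (g x)"
    "\<And>x. x \<in> S \<Longrightarrow> (g has_derivative (\<lambda>h. h *\<^sub>R g' x)) (at x within S)" by blast
  have "(g has_derivative (\<lambda>h. h *\<^sub>R g' t)) (at t)"
    using g(2)[OF t] at_within_open[OF t S(2)] by simp
  then have "((\<lambda>t. \<Sum>n. f n t) has_derivative (\<lambda>h. h *\<^sub>R g' t)) (at t)"
    by (rule has_derivative_transform_within_open[OF _ S(2) t]) (use g(1) sums_unique in metis)
  then show ?thesis by (simp add: has_vector_derivative_def)
qed

lemma mat_pow_commute:
  fixes B C :: "complex^'n^'n"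
  assumes "B ** C = C ** B"
  shows "B ** mat_pow C k = mat_pow C k ** B"
proof (induction k)
  case 0 then show ?case by simp
next
  case (Suc k)
  have "B ** mat_pow C (Suc k) = (B ** C) ** mat_pow C k" by (simp add: matrix_mul_assoc)
  also have "\<dots> = C ** (B ** mat_pow C k)" by (simp add: assms matrix_mul_assoc)
  also have "\<dots> = mat_pow C (Suc k) ** B" by (simp add: Suc matrix_mul_assoc)
  finally show ?case .
qed

lemma mat_pow_vd:
  fixes B C :: "complex^'n^'n"
  assumes BC: "B ** C = C ** B"
  shows "((\<lambda>t. mat_pow (C + t *\<^sub>R B) k) has_vector_derivative (real k *\<^sub>R (B ** mat_pow (C + t *\<^sub>R B) (k - 1)))) (at t)"
proof (induction k)
  case 0 then show ?case by simp
next
  case (Suc k)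
  define P where "P = C + t *\<^sub>R B"
  have comm: "B ** P = P ** B"
    by (simp add: P_def matrix_add_ldistrib matrix_add_rdistrib' matrix_scalar_ac scalar_matrix_assoc BC
        flip: matrix_scalar_ac)
  have dP: "((\<lambda>t. C + t *\<^sub>R B) has_vector_derivative B) (at t)"
    by (auto intro!: derivative_eq_intros)
  have "((\<lambda>t. (C + t *\<^sub>R B) ** mat_pow (C + t *\<^sub>R B) k) has_vector_derivative
      (P ** (real k *\<^sub>R (B ** mat_pow P (k - 1))) + B ** mat_pow P k)) (at t)"
    unfolding P_def by (rule bounded_bilinear.has_vector_derivative[OF bb_mm dP Suc])
  moreover have "P ** (real k *\<^sub>R (B ** mat_pow P (k - 1))) + B ** mat_pow P k
      = real (Suc k) *\<^sub>R (B ** mat_pow P k)"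
  proof (cases k)
    case 0 then show ?thesis by simp
  next
    case (Suc j)
    have e: "P ** (B ** mat_pow P j) = B ** mat_pow P k"
      using Suc by (simp add: matrix_mul_assoc comm)
    have "P ** (real k *\<^sub>R (B ** mat_pow P (k - 1))) = real k *\<^sub>R (P ** (B ** mat_pow P j))"
      using Suc by (simp only: bounded_bilinear.scaleR_right[OF bb_mm] diff_Suc_1)
    also have "\<dots> = real k *\<^sub>R (B ** mat_pow P k)" by (simp only: e)
    finally have e2: "P ** (real k *\<^sub>R (B ** mat_pow P (k - 1))) = real k *\<^sub>R (B ** mat_pow P k)" .
    have e3: "real k *\<^sub>R Z + Z = real (Suc k) *\<^sub>R Z" for Z :: "complex^'n^'n"
      by (simp add: algebra_simps)
    show ?thesis by (simp only: e2 e3)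
  qed
  ultimately show ?case by (simp add: P_def)
qed

lemma mat_pow_norm:
  fixes A :: "complex^'n^'n"
  assumes K: "K > 0" "\<And>(a::complex^'n^'n) (b::complex^'n^'n). norm (a ** b) \<le> norm a * norm b * K"
  shows "norm (mat_pow A k) \<le> norm (mat 1 :: complex^'n^'n) * (K * norm A) ^ k"
proof (induction k)
  case 0 then show ?case by simp
next
  case (Suc k)
  have "norm (mat_pow A (Suc k)) \<le> norm A * norm (mat_pow A k) * K" by (simp add: K(2))
  also have "\<dots> \<le> norm A * (norm (mat 1 :: complex^'n^'n) * (K * norm A) ^ k) * K"
    using K(1) Suc by (intro mult_right_mono mult_left_mono) auto
  also have "\<dots> = norm (mat 1 :: complex^'n^'n) * (K * norm A) ^ Suc k" by (simp add: mult_ac)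
  finally show ?case .
qed



lemma mat_exp_vd:
  fixes B C :: "complex^'n^'n"
  assumes BC: "B ** C = C ** B"
  shows "((\<lambda>t. mat_exp (C + t *\<^sub>R B)) has_vector_derivative (B ** mat_exp (C + t *\<^sub>R B))) (at t)"
proof -
  obtain K where K: "K > 0" "\<And>(a::complex^'n^'n) (b::complex^'n^'n). norm (a ** b) \<le> norm a * norm b * K"
    using bounded_bilinear.pos_bounded[OF bb_mm] by blast
  define R where "R = norm C + (\<bar>t\<bar> + 1) * norm B"
  define N1 where "N1 = norm (mat 1 :: complex^'n^'n)"
  define f where "f n x = (1 / fact n) *\<^sub>R mat_pow (C + x *\<^sub>R B) n" for n x
  define f' where "f' n x = (case n of 0 \<Rightarrow> 0 | Suc m \<Rightarrow> B ** f m x)" for n x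
  define E where "E m = N1 * (K * R) ^ m / fact m" for m
  define M where "M n = (case n of 0 \<Rightarrow> 0 | Suc m \<Rightarrow> norm B * K * E m)" for n
  have Rnn: "R \<ge> 0" unfolding R_def by simp
  have normP: "norm (C + x *\<^sub>R B) \<le> R" if "x \<in> ball t 1" for x
  proof -
    have "\<bar>x\<bar> \<le> \<bar>t\<bar> + 1" using that by (auto simp: dist_real_def)
    then have "\<bar>x\<bar> * norm B \<le> (\<bar>t\<bar> + 1) * norm B" by (intro mult_right_mono) auto
    moreover have "norm (C + x *\<^sub>R B) \<le> norm C + \<bar>x\<bar> * norm B"
      using norm_triangle_ineq[of C "x *\<^sub>R B"] by simp
    ultimately show ?thesis unfolding R_def by linarith
  qed
  have fb: "norm (f n x) \<le> E n" if "x \<in> ball t 1" for n x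
  proof -
    have "norm (mat_pow (C + x *\<^sub>R B) n) \<le> N1 * (K * norm (C + x *\<^sub>R B)) ^ n"
      unfolding N1_def by (rule mat_pow_norm[OF K])
    also have "\<dots> \<le> N1 * (K * R) ^ n"
      unfolding N1_def using K(1) normP[OF that]
      by (intro mult_left_mono power_mono mult_left_mono) auto
    finally have "norm (mat_pow (C + x *\<^sub>R B) n) \<le> N1 * (K * R) ^ n" .
    then show ?thesis unfolding f_def E_def
      by (simp add: divide_right_mono)
  qed
  have f'b: "norm (f' n x) \<le> M n" if "x \<in> ball t 1" for n x
  proof (cases n)
    case 0 then show ?thesis by (simp add: f'_def M_def)
  next
    case (Suc m)
    have "norm (B ** f m x) \<le> norm B * norm (f m x) * K" by (rule K(2))
    also have "\<dots> \<le> norm B * E m * K"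
      using K(1) fb[OF that] by (intro mult_right_mono mult_left_mono) auto
    finally show ?thesis using Suc by (simp add: f'_def M_def mult_ac)
  qed
  have sE: "summable E"
  proof -
    have "summable (\<lambda>m. N1 * (inverse (fact m) * (K * R) ^ m))"
      by (intro summable_mult summable_exp)
    then show ?thesis unfolding E_def by (simp add: divide_inverse mult_ac)
  qed
  have sM: "summable M"
  proof -
    have "summable (\<lambda>m. norm B * K * E m)" by (intro summable_mult sE)
    then have "summable (\<lambda>m. M (Suc m))" by (simp add: M_def)
    then show ?thesis by (simp only: summable_Suc_iff)
  qed
  have tb: "t \<in> ball t 1" by simp
  have sf: "summable (\<lambda>n. f n x)" if "x \<in> ball t 1" for x
    by (rule summable_comparison_test[OF _ sE]) (use fb[OF that] in auto)
  have sf': "summable (\<lambda>n. f' n x)" if "x \<in> ball t 1" for x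
    by (rule summable_comparison_test[OF _ sM]) (use f'b[OF that] in auto)
  have der: "(f n has_vector_derivative f' n x) (at x)" for n x
  proof -
    have "(f n has_vector_derivative (1 / fact n) *\<^sub>R (real n *\<^sub>R (B ** mat_pow (C + x *\<^sub>R B) (n - 1)))) (at x)"
      unfolding f_def
      by (rule bounded_linear.has_vector_derivative[OF bounded_linear_scaleR_right mat_pow_vd[OF BC]])
    moreover have "(1 / fact n) *\<^sub>R (real n *\<^sub>R (B ** mat_pow (C + x *\<^sub>R B) (n - 1))) = f' n x"
    proof (cases n)
      case 0 then show ?thesis by (simp add: f'_def)
    next
      case (Suc m)
      have fn: "(fact n :: real) = real n * fact m" using Suc by simp
      have "real n > 0" using Suc by simp
      then have "(1 / fact n) * real n = 1 / fact m" by (simp add: fn)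
      then show ?thesis using Suc
        by (simp add: f'_def f_def bounded_bilinear.scaleR_right[OF bb_mm])
    qed
    ultimately show ?thesis by simp
  qed
  have ul: "uniform_limit (ball t 1) (\<lambda>n x. \<Sum>i<n. f' i x) (\<lambda>x. \<Sum>i. f' i x) sequentially"
    by (rule Weierstrass_m_test[OF f'b sM])
  have "((\<lambda>x. \<Sum>n. f n x) has_vector_derivative (\<Sum>i. f' i t)) (at t)"
    by (rule vd_series[OF convex_ball open_ball der ul tb sf[OF tb] tb])
  moreover have "(\<Sum>i. f' i t) = B ** mat_exp (C + t *\<^sub>R B)"
  proof -
    have "(\<Sum>i. f' i t) = (\<Sum>n. f' (Suc n) t)"
      using suminf_split_head[OF sf'[OF tb]] by (simp add: f'_def)
    also have "\<dots> = (\<Sum>n. B ** f n t)" by (simp add: f'_def)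
    also have "\<dots> = B ** (\<Sum>n. f n t)"
      by (rule bounded_linear.suminf[OF bounded_bilinear.bounded_linear_right[OF bb_mm] sf[OF tb], symmetric])
    finally show ?thesis by (simp add: mat_exp_def f_def)
  qed
  moreover have "(\<lambda>x. \<Sum>n. f n x) = (\<lambda>x. mat_exp (C + x *\<^sub>R B))"
    by (simp add: mat_exp_def f_def)
  ultimately show ?thesis by simp
qed



definition csc :: "complex \<Rightarrow> complex^'n^'m \<Rightarrow> complex^'n^'m" where
  "csc c A = (\<chi> i j. c * A$i$j)"

lemma csc_mul_left[simp]: "csc c A ** B = csc c (A ** B)"
  by (simp add: csc_def matrix_matrix_mult_def vec_eq_iff sum_distrib_left mult.assoc)
lemma csc_mul_right[simp]: "A ** csc c B = csc c (A ** B)"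
  by (simp add: csc_def matrix_matrix_mult_def vec_eq_iff sum_distrib_left mult_ac)
lemma csc_csc[simp]: "csc c (csc d A) = csc (c*d) A"
  by (simp add: csc_def vec_eq_iff mult.assoc)
lemma csc_add[simp]: "csc c (A + B) = csc c A + csc c B"
  by (simp add: csc_def vec_eq_iff algebra_simps)
lemma csc_diff[simp]: "csc c (A - B) = csc c A - csc c B"
  by (simp add: csc_def vec_eq_iff algebra_simps)
lemma csc_minus[simp]: "csc c (- A) = - csc c A"
  by (simp add: csc_def vec_eq_iff algebra_simps)
lemma csc_1[simp]: "csc 1 A = A"
  by (simp add: csc_def vec_eq_iff)
lemma csc_neg1[simp]: "csc (-1) A = - A"
  by (simp add: csc_def vec_eq_iff)
lemma csc_0[simp]: "csc 0 A = 0"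
  by (simp add: csc_def vec_eq_iff)
lemma csc_zero[simp]: "csc c 0 = 0"
  by (simp add: csc_def vec_eq_iff)
lemma csc_neg_scalar: "csc (- c) A = - csc c A"
  by (simp add: csc_def vec_eq_iff)
lemma csc_numeral[simp]: "csc c (numeral w * A) = numeral w * csc c A"
  by (simp add: csc_def vec_eq_iff mult_ac)
lemma csc_numeral2[simp]: "numeral w * csc c A = csc (numeral w * c) A"
  by (simp add: csc_def vec_eq_iff mult_ac)
lemma half_half: "csc (1/2) Z + csc (1/2) Z = Z"
  by (simp add: csc_def vec_eq_iff)

lemma mm_diff_l: "(A - B) ** C = A ** C - B ** (C::complex^'k^'n)"
  for A B :: "complex^'n^'m"
  by (rule bounded_bilinear.diff_left[OF bb_mm])
lemma mm_diff_r: "A ** (B - C) = A ** B - A ** (C::complex^'k^'n)"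
  for A :: "complex^'n^'m"
  by (rule bounded_bilinear.diff_right[OF bb_mm])
lemma mm_minus_l: "(- A) ** C = - (A ** (C::complex^'k^'n))"
  for A :: "complex^'n^'m"
  by (rule bounded_bilinear.minus_left[OF bb_mm])
lemma mm_minus_r: "A ** (- C) = - (A ** (C::complex^'k^'n))"
  for A :: "complex^'n^'m"
  by (rule bounded_bilinear.minus_right[OF bb_mm])

lemmas ms = matrix_mul_assoc matrix_add_ldistrib matrix_add_rdistrib' mm_diff_l mm_diff_r mm_minus_l mm_minus_r

lemma core_alg:
  fixes S T X K Gp Gm :: "complex^'n^'n"
  defines "j \<equiv> \<i>"
  assumes ST: "S**T = mat 1" "T**S = mat 1" and XS: "X**S = S**X"
    and Gp: "Gp**(mat 1 - csc j (K**X)) = mat 1" "(mat 1 - csc j (K**X))**Gp = mat 1"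
    and Gm: "Gm**(mat 1 + csc j (K**X)) = mat 1" "(mat 1 + csc j (K**X))**Gm = mat 1"
  shows "(X**Gp**T**Gp)**(S**K+K**S)**(X**Gm**T**Gm) + (X**Gm**T**Gm)**(S**K+K**S)**(X**Gp**T**Gp)
         = csc j ((X**Gm**T**Gm) - (X**Gp**T**Gp))"
proof -
  define A where "A = K**X"
  have jj: "csc (-j) (csc j z) = z" for z :: "complex^'n^'n" by (simp add: j_def)
  have GpA: "Gp**A = csc (-j) (Gp - mat 1)"
  proof -
    have "Gp - csc j (Gp**A) = mat 1" using Gp(1) unfolding A_def by (simp add: ms)
    then have "csc j (Gp**A) = Gp - mat 1" by (simp add: algebra_simps)
    then show ?thesis using jj[of "Gp**A"] by simp
  qed
  have AGp: "A**Gp = csc (-j) (Gp - mat 1)"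
  proof -
    have "Gp - csc j (A**Gp) = mat 1" using Gp(2) unfolding A_def by (simp add: ms)
    then have "csc j (A**Gp) = Gp - mat 1" by (simp add: algebra_simps)
    then show ?thesis using jj[of "A**Gp"] by simp
  qed
  have GmA: "Gm**A = csc (-j) (mat 1 - Gm)"
  proof -
    have "Gm + csc j (Gm**A) = mat 1" using Gm(1) unfolding A_def by (simp add: ms)
    then have "csc j (Gm**A) = mat 1 - Gm" by (simp add: algebra_simps)
    then show ?thesis using jj[of "Gm**A"] by simp
  qed
  have AGm: "A**Gm = csc (-j) (mat 1 - Gm)"
  proof -
    have "Gm + csc j (A**Gm) = mat 1" using Gm(2) unfolding A_def by (simp add: ms)
    then have "csc j (A**Gm) = mat 1 - Gm" by (simp add: algebra_simps)
    then show ?thesis using jj[of "A**Gm"] by simp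
  qed
  have KSX: "Z**S**X = Z**X**S" for Z :: "complex^'n^'n" by (simp add: XS flip: matrix_mul_assoc)
  have mid1: "Gp**(S**K+K**S)**X**Gm = csc (-j) (Gp**S - S**Gm)"
  proof -
    have "Gp**(S**K+K**S)**X**Gm = Gp**S**(A**Gm) + (Gp**A)**S**Gm"
      using KSX unfolding A_def by (simp add: ms)
    also have "\<dots> = Gp**S**(csc (-j) (mat 1 - Gm)) + (csc (-j) (Gp - mat 1))**S**Gm" by (simp only: AGm GpA)
    also have "\<dots> = csc (-j) (Gp**S - S**Gm)" by (simp add: ms)
    finally show ?thesis .
  qed
  have mid2: "Gm**(S**K+K**S)**X**Gp = csc (-j) (S**Gp - Gm**S)"
  proof -
    have "Gm**(S**K+K**S)**X**Gp = Gm**S**(A**Gp) + (Gm**A)**S**Gp"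
      using KSX unfolding A_def by (simp add: ms)
    also have "\<dots> = Gm**S**(csc (-j) (Gp - mat 1)) + (csc (-j) (mat 1 - Gm))**S**Gp" by (simp only: AGp GmA)
    also have "\<dots> = csc (-j) (S**Gp - Gm**S)" by (simp add: ms)
    finally show ?thesis .
  qed
  have GpGm2: "Gp**Gm + Gp**Gm = Gp + Gm"
  proof -
    have "Gp**(mat 1 - csc j A)**Gm = Gm" using Gp(1) unfolding A_def by simp
    moreover have "Gp**(mat 1 + csc j A)**Gm = Gp" using Gm(2) unfolding A_def by (simp flip: matrix_mul_assoc)
    ultimately show ?thesis by (simp add: ms algebra_simps)
  qed
  have GmGp2: "Gm**Gp + Gm**Gp = Gp + Gm"
  proof -
    have "Gm**(mat 1 - csc j A)**Gp = Gm" using Gp(2) unfolding A_def by (simp flip: matrix_mul_assoc)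
    moreover have "Gm**(mat 1 + csc j A)**Gp = Gp" using Gm(1) unfolding A_def by simp
    ultimately show ?thesis by (simp add: ms algebra_simps)
  qed
  have hh: "csc (1/2) (z+z) = z" for z :: "complex^'n^'n" by (simp only: csc_add half_half)
  have Phi1: "Gp**Gm = csc (1/2) (Gp+Gm)" using hh[of "Gp**Gm"] GpGm2 by simp
  have Phi2: "Gm**Gp = csc (1/2) (Gp+Gm)" using hh[of "Gm**Gp"] GmGp2 by simp
  have e1: "(X**Gp**T**Gp)**(S**K+K**S)**(X**Gm**T**Gm) = X**Gp**T**(Gp**(S**K+K**S)**X**Gm)**T**Gm"
    by (simp add: matrix_mul_assoc)
  have e2: "(X**Gm**T**Gm)**(S**K+K**S)**(X**Gp**T**Gp) = X**Gm**T**(Gm**(S**K+K**S)**X**Gp)**T**Gp"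
    by (simp add: matrix_mul_assoc)
  have ST1: "Z**S**T = Z" "Z**T**S = Z" for Z :: "complex^'n^'n"
    using ST by (simp_all flip: matrix_mul_assoc)
  have e3: "X**Gp**T**(csc (-j) (Gp**S - S**Gm))**T**Gm = csc (-j) (X**Gp**T**(Gp**Gm) - X**(Gp**Gm)**T**Gm)"
    by (simp add: ms ST1)
  have e4: "X**Gm**T**(csc (-j) (S**Gp - Gm**S))**T**Gp = csc (-j) (X**(Gm**Gp)**T**Gp - X**Gm**T**(Gm**Gp))"
    by (simp add: ms ST1)
  have "(X**Gp**T**Gp)**(S**K+K**S)**(X**Gm**T**Gm) + (X**Gm**T**Gm)**(S**K+K**S)**(X**Gp**T**Gp)
     = csc (-j) (X**Gp**T**(csc (1/2) (Gp+Gm)) - X**(csc (1/2) (Gp+Gm))**T**Gm)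
       + csc (-j) (X**(csc (1/2) (Gp+Gm))**T**Gp - X**Gm**T**(csc (1/2) (Gp+Gm)))"
    by (simp only: e1 e2 mid1 mid2 e3 e4 Phi1 Phi2)
  also have "\<dots> = csc (-j) (csc (1/2) ((X**Gp**T**Gp - X**Gm**T**Gm) + (X**Gp**T**Gp - X**Gm**T**Gm)))"
    by (simp add: ms algebra_simps)
  also have "\<dots> = csc j ((X**Gm**T**Gm) - (X**Gp**T**Gp))"
    by (simp only: hh) (simp add: csc_neg_scalar)
  finally show ?thesis .
qed



lemma bl_csc: "bounded_linear (csc c :: complex^'n^'m \<Rightarrow> complex^'n^'m)"
proof -
  have "linear (csc c :: complex^'n^'m \<Rightarrow> complex^'n^'m)"
    by (rule linearI) (simp_all add: csc_def vec_eq_iff mult_ac distrib_left)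
  then show ?thesis using linear_conv_bounded_linear by blast
qed

lemma deriv_alg:
  fixes X T K G :: "complex^'n^'n"
  assumes c: "c \<noteq> 0" and XT: "X ** T = T ** X"
    and G: "G ** (mat 1 - csc c (K ** X)) = mat 1"
  shows "X ** (- (G ** (- csc c (K ** (- T ** X))) ** G)) + (- T ** X) ** G = - (X ** G ** T ** G)"
proof -
  have GKX0: "csc c (G ** K ** X) = G - mat 1"
    using G by (simp add: ms algebra_simps)
  have GKX: "Z ** G ** K ** X = csc (inverse c) (Z ** G - Z)" for Z :: "complex^'n^'n"
  proof -
    have "csc (inverse c) (csc c (G ** K ** X)) = G ** K ** X" using c by simp
    then have "G ** K ** X = csc (inverse c) (G - mat 1)" using GKX0 by simp
    then have "Z ** (G ** K ** X) = Z ** csc (inverse c) (G - mat 1)" by simp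
    then show ?thesis by (simp add: ms)
  qed
  have TX: "Z ** T ** X = Z ** X ** T" for Z :: "complex^'n^'n"
    by (simp add: XT flip: matrix_mul_assoc)
  have TX0: "T ** X = X ** T" using XT by simp
  show ?thesis using c by (simp add: ms TX TX0 GKX)
qed

lemma final_alg:
  fixes a b :: "complex^'m^'m"
  assumes "a ** b + b ** a = csc \<i> (b - a)"
  shows "csc (1/2) (- a - b) ** csc (1/2) (- a - b) + csc (\<i>/2) (b - a) ** csc (\<i>/2) (b - a) = csc (\<i>/2) (b - a)"
proof -
  have "csc (1/2) (- a - b) ** csc (1/2) (- a - b) + csc (\<i>/2) (b - a) ** csc (\<i>/2) (b - a)
      = csc (1/2) (a ** b + b ** a)"
    by (simp add: ms algebra_simps csc_neg_scalar)
  also have "\<dots> = csc (\<i>/2) (b - a)" using assms by simp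
  finally show ?thesis .
qed

lemma inv_unique:
  fixes M Z :: "complex^'n^'n"
  assumes "Z ** M = mat 1" "invertible M"
  shows "matrix_inv M = Z"
proof -
  have "Z = Z ** (M ** matrix_inv M)" using minv_right[OF assms(2)] by simp
  also have "\<dots> = matrix_inv M" using assms(1) by (simp add: matrix_mul_assoc)
  finally show ?thesis by simp
qed

lemma invertible_factors:
  fixes P Q :: "complex^'n^'n"
  assumes "invertible (P ** Q)"
  shows "invertible P" "invertible Q"
proof -
  obtain R where R: "P ** Q ** R = mat 1" "R ** (P ** Q) = mat 1"
    using assms unfolding invertible_def by blast
  have "P ** (Q ** R) = mat 1" using R(1) by (simp add: matrix_mul_assoc)
  then show "invertible P" using invertible_right_inverse by blast
  have "(R ** P) ** Q = mat 1" using R(2) by (simp add: matrix_mul_assoc)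
  then show "invertible Q" using invertible_left_inverse by blast
qed

lemma mat_exp_summable:
  fixes A :: "complex^'n^'n"
  shows "summable (\<lambda>k. (1 / fact k) *\<^sub>R mat_pow A k)"
proof -
  obtain K where K: "K > 0" "\<And>(a::complex^'n^'n) (b::complex^'n^'n). norm (a ** b) \<le> norm a * norm b * K"
    using bounded_bilinear.pos_bounded[OF bb_mm] by blast
  define N1 where "N1 = norm (mat 1 :: complex^'n^'n)"
  have sm: "summable (\<lambda>m. N1 * (inverse (fact m) * (K * norm A) ^ m))"
    by (intro summable_mult summable_exp)
  have nb: "norm ((1 / fact k) *\<^sub>R mat_pow A k) \<le> N1 * (inverse (fact k) * (K * norm A) ^ k)" for k
  proof -
    have "norm (mat_pow A k) \<le> N1 * (K * norm A) ^ k" unfolding N1_def by (rule mat_pow_norm[OF K])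
    then show ?thesis by (simp add: divide_right_mono mult_ac divide_inverse mult_left_mono)
  qed
  show ?thesis by (rule summable_comparison_test'[OF sm nb])
qed

lemma mat_exp_commute:
  fixes Z A :: "complex^'n^'n"
  assumes "Z ** A = A ** Z"
  shows "Z ** mat_exp A = mat_exp A ** Z"
proof -
  have s: "summable (\<lambda>k. (1 / fact k) *\<^sub>R mat_pow A k)" by (rule mat_exp_summable)
  have "Z ** mat_exp A = (\<Sum>k. Z ** ((1 / fact k) *\<^sub>R mat_pow A k))"
    unfolding mat_exp_def
    by (rule bounded_linear.suminf[OF bounded_bilinear.bounded_linear_right[OF bb_mm] s])
  also have "\<dots> = (\<Sum>k. ((1 / fact k) *\<^sub>R mat_pow A k) ** Z)"
    using mat_pow_commute[OF assms]
    by (simp add: bounded_bilinear.scaleR_right[OF bb_mm] bounded_bilinear.scaleR_left[OF bb_mm])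
  also have "\<dots> = mat_exp A ** Z"
    unfolding mat_exp_def
    by (rule bounded_linear.suminf[OF bounded_bilinear.bounded_linear_left[OF bb_mm] s, symmetric])
  finally show ?thesis .
qed



lemma mm_scaleR_l: "(r *\<^sub>R A) ** B = r *\<^sub>R (A ** (B::complex^'k^'n))" for A :: "complex^'n^'m"
  by (rule bounded_bilinear.scaleR_left[OF bb_mm])
lemma mm_scaleR_r: "A ** (r *\<^sub>R B) = r *\<^sub>R (A ** (B::complex^'k^'n))" for A :: "complex^'n^'m"
  by (rule bounded_bilinear.scaleR_right[OF bb_mm])

lemma phi_alg:
  fixes A Gp Gm :: "complex^'n^'n"
  assumes Gp: "Gp**(mat 1 - csc \<i> A) = mat 1" "(mat 1 - csc \<i> A)**Gp = mat 1"
    and Gm: "Gm**(mat 1 + csc \<i> A) = mat 1" "(mat 1 + csc \<i> A)**Gm = mat 1"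
  shows "Gm ** Gp = csc (1/2) (Gp + Gm)" "A ** (Gm ** Gp) = csc (-\<i>/2) (Gp - Gm)"
proof -
  have jj: "csc (-\<i>) (csc \<i> z) = z" for z :: "complex^'n^'n" by simp
  have AGp: "A**Gp = csc (-\<i>) (Gp - mat 1)"
  proof -
    have "Gp - csc \<i> (A**Gp) = mat 1" using Gp(2) by (simp add: ms)
    then have "csc \<i> (A**Gp) = Gp - mat 1" by (simp add: algebra_simps)
    then show ?thesis using jj[of "A**Gp"] by simp
  qed
  have AGm: "A**Gm = csc (-\<i>) (mat 1 - Gm)"
  proof -
    have "Gm + csc \<i> (A**Gm) = mat 1" using Gm(2) by (simp add: ms)
    then have "csc \<i> (A**Gm) = mat 1 - Gm" by (simp add: algebra_simps)
    then show ?thesis using jj[of "A**Gm"] by simp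
  qed
  have GmGp2: "Gm**Gp + Gm**Gp = Gp + Gm"
  proof -
    have "Gm**(mat 1 - csc \<i> A)**Gp = Gm" using Gp(2) by (simp flip: matrix_mul_assoc)
    moreover have "Gm**(mat 1 + csc \<i> A)**Gp = Gp" using Gm(1) by simp
    ultimately show ?thesis by (simp add: ms algebra_simps)
  qed
  have hh: "csc (1/2) (z+z) = z" for z :: "complex^'n^'n" by (simp only: csc_add half_half)
  show Phi: "Gm**Gp = csc (1/2) (Gp+Gm)" using hh[of "Gm**Gp"] GmGp2 by simp
  have "A ** (Gm ** Gp) = csc (1/2) (A ** Gp + A ** Gm)" unfolding Phi by (simp add: ms)
  also have "\<dots> = csc (-\<i>/2) (Gp - Gm)" unfolding AGp AGm by (simp add: algebra_simps)
  finally show "A ** (Gm ** Gp) = csc (-\<i>/2) (Gp - Gm)" .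
qed



theorem mainTheorem2:
  fixes S K :: "complex^'M^'M"
    and U :: "complex^'M^'m"
    and V :: "complex^'m^'M"
    and p0 :: "real \<Rightarrow> complex^'m^'m"
    and D :: "(real \<times> real) set"
    and Xi :: "real \<Rightarrow> real \<Rightarrow> complex^'M^'M"
    and q p :: "real \<Rightarrow> real \<Rightarrow> complex^'m^'m"
  assumes S_inv: "invertible S"
    and K_eq: "S ** K + K ** S = V ** U"
    and Xi_def: "\<And>x y. Xi x y = mat_exp (- (x *\<^sub>R S) - (y *\<^sub>R matrix_inv S))"
    and q_def: "\<And>x y. q x y = U ** Xi x y ** matrix_inv (mat 1 + (K ** Xi x y) ** (K ** Xi x y)) ** V"
    and p_def: "\<And>x y. p x y = p0 x - U ** Xi x y ** K ** Xi x y
                         ** matrix_inv (mat 1 + (K ** Xi x y) ** (K ** Xi x y)) ** V"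
    and D_open: "open D"
    and D_inv: "\<And>x y. (x, y) \<in> D \<Longrightarrow> invertible (mat 1 + (K ** Xi x y) ** (K ** Xi x y))"
  shows "\<forall>(x, y) \<in> D.
           (let qy = vector_derivative (\<lambda>t. q x t) (at y);
                py = vector_derivative (\<lambda>t. p x t) (at y)
            in qy ** qy + py ** py = py)"
proof -
  define T where "T = matrix_inv S"
  have ST: "S ** T = mat 1" "T ** S = mat 1"
    unfolding T_def using S_inv by (simp_all add: minv_right minv_left)
  have main: "vector_derivative (\<lambda>t. q x t) (at y) ** vector_derivative (\<lambda>t. q x t) (at y)
      + vector_derivative (\<lambda>t. p x t) (at y) ** vector_derivative (\<lambda>t. p x t) (at y)
      = vector_derivative (\<lambda>t. p x t) (at y)" if xy: "(x, y) \<in> D" for x y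
  proof -
    define C where "C = - (x *\<^sub>R S)"
    define X where "X t = Xi x t" for t
    have Xeq: "X t = mat_exp (C + t *\<^sub>R (- T))" for t
      unfolding X_def Xi_def C_def T_def by (simp add: algebra_simps)
    have BC: "(- T) ** C = C ** (- T)"
      unfolding C_def by (simp add: ms mm_scaleR_l mm_scaleR_r ST)
    have dX: "(X has_vector_derivative (- T) ** X t) (at t)" for t
      unfolding Xeq by (rule mat_exp_vd[OF BC])
    have XT: "X t ** T = T ** X t" for t
    proof -
      have "T ** (C + t *\<^sub>R (- T)) = (C + t *\<^sub>R (- T)) ** T"
        unfolding C_def by (simp add: ms mm_scaleR_l mm_scaleR_r ST)
      then show ?thesis unfolding Xeq by (simp add: mat_exp_commute)
    qed
    have XS: "X t ** S = S ** X t" for t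
    proof -
      have "S ** (C + t *\<^sub>R (- T)) = (C + t *\<^sub>R (- T)) ** S"
        unfolding C_def by (simp add: ms mm_scaleR_l mm_scaleR_r ST)
      then show ?thesis unfolding Xeq by (simp add: mat_exp_commute)
    qed
    have ev: "\<forall>\<^sub>F t in nhds y. (x, t) \<in> D"
    proof -
      have "((\<lambda>t. (x, t)) \<longlongrightarrow> (x, y)) (nhds y)"
        by (intro tendsto_Pair tendsto_const filterlim_ident)
      then show ?thesis using D_open xy unfolding tendsto_def by blast
    qed
    define A where "A t = K ** X t" for t
    define Np where "Np t = mat 1 - csc \<i> (A t)" for t
    define Nm where "Nm t = mat 1 + csc \<i> (A t)" for t
    define Gp where "Gp t = matrix_inv (Np t)" for t
    define Gm where "Gm t = matrix_inv (Nm t)" for t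
    have fac1: "mat 1 + A t ** A t = Np t ** Nm t" for t
      unfolding Np_def Nm_def by (simp add: ms)
    have fac2: "mat 1 + A t ** A t = Nm t ** Np t" for t
      unfolding Np_def Nm_def by (simp add: ms)
    have invs: "invertible (Np t) \<and> invertible (Nm t)" if "(x, t) \<in> D" for t
    proof -
      have "invertible (mat 1 + A t ** A t)" using D_inv[OF that] unfolding A_def X_def .
      then show ?thesis unfolding fac1 using invertible_factors by blast
    qed
    have evinv: "\<forall>\<^sub>F t in nhds y. invertible (Np t) \<and> invertible (Nm t)"
      using ev by (rule eventually_mono) (rule invs)
    have Gfacts: "Gp t ** Np t = mat 1 \<and> Np t ** Gp t = mat 1 \<and> Gm t ** Nm t = mat 1 \<and> Nm t ** Gm t = mat 1"
      if "(x, t) \<in> D" for t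
      using invs[OF that] unfolding Gp_def Gm_def by (simp add: minv_left minv_right)
    have invE: "matrix_inv (mat 1 + A t ** A t) = Gm t ** Gp t" if "(x, t) \<in> D" for t
    proof -
      have i: "invertible (Np t ** Nm t)" using invs[OF that] by (simp add: invertible_mult)
      have "(Gm t ** Gp t) ** (Np t ** Nm t) = Gm t ** ((Gp t ** Np t) ** Nm t)"
        by (simp add: matrix_mul_assoc)
      also have "\<dots> = mat 1" using Gfacts[OF that] by simp
      finally show ?thesis unfolding fac1 by (rule inv_unique[OF _ i])
    qed
    define wp where "wp t = U ** (X t ** Gp t) ** V" for t
    define wm where "wm t = U ** (X t ** Gm t) ** V" for t
    have qeq: "q x t = csc (1/2) (wp t + wm t)" if "(x, t) \<in> D" for t
    proof -
      have inv: "matrix_inv (mat 1 + A t ** A t) = Gm t ** Gp t"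
        by (rule invE[OF that])
      have ph: "Gm t ** Gp t = csc (1/2) (Gp t + Gm t)"
        using phi_alg(1)[of "Gp t" "A t" "Gm t"] Gfacts[OF that] unfolding Np_def Nm_def by blast
      show ?thesis unfolding q_def
        by (simp add: X_def[symmetric] A_def[symmetric] inv ph wp_def wm_def ms)
    qed
    have peq: "p x t = p0 x - csc (-\<i>/2) (wp t - wm t)" if "(x, t) \<in> D" for t
    proof -
      have inv: "matrix_inv (mat 1 + A t ** A t) = Gm t ** Gp t"
        by (rule invE[OF that])
      have ph: "A t ** (Gm t ** Gp t) = csc (-\<i>/2) (Gp t - Gm t)"
        using phi_alg(2)[of "Gp t" "A t" "Gm t"] Gfacts[OF that] unfolding Np_def Nm_def by blast
      have "U ** X t ** K ** X t ** matrix_inv (mat 1 + A t ** A t) ** V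
          = U ** (X t ** (A t ** (Gm t ** Gp t))) ** V"
        unfolding inv unfolding A_def by (simp add: matrix_mul_assoc)
      also have "\<dots> = csc (-\<i>/2) (wp t - wm t)" unfolding ph wp_def wm_def by (simp add: ms)
      finally show ?thesis unfolding p_def X_def A_def by simp
    qed
    have blK: "bounded_linear (\<lambda>Z. csc c (K ** Z))" for c
      by (rule bounded_linear_compose[OF bl_csc bounded_bilinear.bounded_linear_right[OF bb_mm]])
    have blUV: "bounded_linear (\<lambda>Z. U ** Z ** V)"
      by (rule bounded_linear_compose[OF bounded_bilinear.bounded_linear_left[OF bb_mm]
            bounded_bilinear.bounded_linear_right[OF bb_mm]])
    have dw: "((\<lambda>t. U ** (X t ** matrix_inv (mat 1 - csc c (K ** X t))) ** V) has_vector_derivative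
          - (U ** (X y ** matrix_inv (mat 1 - csc c (K ** X y)) ** T ** matrix_inv (mat 1 - csc c (K ** X y))) ** V)) (at y)"
      if c: "c \<noteq> 0" and evc: "\<forall>\<^sub>F t in nhds y. invertible (mat 1 - csc c (K ** X t))" for c
    proof -
      define N where "N t = mat 1 - csc c (K ** X t)" for t
      define G where "G t = matrix_inv (N t)" for t
      have d1: "((\<lambda>t. csc c (K ** X t)) has_vector_derivative csc c (K ** (- T ** X y))) (at y)"
        by (rule bounded_linear.has_vector_derivative[OF blK dX])
      have dN: "(N has_vector_derivative - csc c (K ** (- T ** X y))) (at y)"
        unfolding N_def
        by (rule has_vector_derivative_eq_rhs[OF has_vector_derivative_diff[OF has_vector_derivative_const d1]]) simp
      have dG: "(G has_vector_derivative - (G y ** (- csc c (K ** (- T ** X y))) ** G y)) (at y)"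
        unfolding G_def by (rule inv_vd[OF dN]) (use evc in \<open>simp add: N_def\<close>)
      have dXG: "((\<lambda>t. X t ** G t) has_vector_derivative
          X y ** (- (G y ** (- csc c (K ** (- T ** X y))) ** G y)) + (- T ** X y) ** G y) (at y)"
        by (rule bounded_bilinear.has_vector_derivative[OF bb_mm dX dG])
      have invy: "invertible (N y)" using evc eventually_nhds_x_imp_x unfolding N_def by blast
      have GN: "G y ** (mat 1 - csc c (K ** X y)) = mat 1"
        using minv_left[OF invy] unfolding G_def N_def .
      have alg: "X y ** (- (G y ** (- csc c (K ** (- T ** X y))) ** G y)) + (- T ** X y) ** G y
          = - (X y ** G y ** T ** G y)"
        by (rule deriv_alg[OF c XT GN])
      have "((\<lambda>t. U ** (X t ** G t) ** V) has_vector_derivative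
          U ** (X y ** (- (G y ** (- csc c (K ** (- T ** X y))) ** G y)) + (- T ** X y) ** G y) ** V) (at y)"
        by (rule bounded_linear.has_vector_derivative[OF blUV dXG])
      then have "((\<lambda>t. U ** (X t ** G t) ** V) has_vector_derivative U ** (- (X y ** G y ** T ** G y)) ** V) (at y)"
        unfolding alg .
      then show ?thesis unfolding G_def N_def by (simp only: mm_minus_l mm_minus_r)
    qed
    define Yp where "Yp = X y ** Gp y ** T ** Gp y"
    define Ym where "Ym = X y ** Gm y ** T ** Gm y"
    define a where "a = U ** Yp ** V"
    define b where "b = U ** Ym ** V"
    have dwp: "(wp has_vector_derivative - a) (at y)"
    proof -
      have "\<forall>\<^sub>F t in nhds y. invertible (mat 1 - csc \<i> (K ** X t))"
        using evinv by (rule eventually_mono) (simp add: Np_def A_def)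
      from dw[OF _ this] show ?thesis
        unfolding wp_def Gp_def Np_def A_def a_def Yp_def by simp
    qed
    have Nm_alt: "Nm t = mat 1 - csc (-\<i>) (K ** X t)" for t
      unfolding Nm_def A_def by (simp add: csc_neg_scalar)
    have dwm: "(wm has_vector_derivative - b) (at y)"
    proof -
      have "\<forall>\<^sub>F t in nhds y. invertible (mat 1 - csc (-\<i>) (K ** X t))"
        using evinv by (rule eventually_mono) (simp add: Nm_alt)
      from dw[OF _ this] show ?thesis
        unfolding wm_def Gm_def Nm_alt a_def b_def Ym_def by simp
    qed
    have dQ: "((\<lambda>t. csc (1/2) (wp t + wm t)) has_vector_derivative csc (1/2) (- a + - b)) (at y)"
      by (rule bounded_linear.has_vector_derivative[OF bl_csc has_vector_derivative_add[OF dwp dwm]])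
    have dP: "((\<lambda>t. p0 x - csc (-\<i>/2) (wp t - wm t)) has_vector_derivative 0 - csc (-\<i>/2) (- a - - b)) (at y)"
      by (rule has_vector_derivative_diff[OF has_vector_derivative_const
            bounded_linear.has_vector_derivative[OF bl_csc has_vector_derivative_diff[OF dwp dwm]]])
    have xyD: "(x, y) \<in> D" by (rule xy)
    have qv: "vector_derivative (\<lambda>t. q x t) (at y) = csc (1/2) (- a - b)"
    proof -
      have "((\<lambda>t. q x t) has_vector_derivative csc (1/2) (- a + - b)) (at y)"
        using dQ has_vector_derivative_cong_ev[where f="\<lambda>t. q x t" and S=UNIV and x=y and g="\<lambda>t. csc (1/2) (wp t + wm t)"]
          ev qeq[OF xyD] by (simp add: eventually_mono qeq)
      then show ?thesis by (simp add: vector_derivative_at)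
    qed
    have pv: "vector_derivative (\<lambda>t. p x t) (at y) = csc (\<i>/2) (b - a)"
    proof -
      have "((\<lambda>t. p x t) has_vector_derivative 0 - csc (-\<i>/2) (- a - - b)) (at y)"
        using dP has_vector_derivative_cong_ev[where f="\<lambda>t. p x t" and S=UNIV and x=y and g="\<lambda>t. p0 x - csc (-\<i>/2) (wp t - wm t)"]
          ev peq[OF xyD] by (simp add: eventually_mono peq)
      then have "vector_derivative (\<lambda>t. p x t) (at y) = 0 - csc (-\<i>/2) (- a - - b)"
        by (simp add: vector_derivative_at)
      also have "\<dots> = csc (\<i>/2) (b - a)"
        by (simp add: csc_neg_scalar algebra_simps)
      finally show ?thesis .
    qed
    have Gy: "Gp y ** Np y = mat 1 \<and> Np y ** Gp y = mat 1 \<and> Gm y ** Nm y = mat 1 \<and> Nm y ** Gm y = mat 1"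
      by (rule Gfacts[OF xyD])
    have core: "Yp ** (S ** K + K ** S) ** Ym + Ym ** (S ** K + K ** S) ** Yp = csc \<i> (Ym - Yp)"
      unfolding Yp_def Ym_def
      by (rule core_alg[OF ST XS]) (use Gy in \<open>simp_all add: Np_def Nm_def A_def\<close>)
    have hyp: "a ** b + b ** a = csc \<i> (b - a)"
    proof -
      have "a ** b + b ** a = U ** (Yp ** (V ** U) ** Ym + Ym ** (V ** U) ** Yp) ** V"
        unfolding a_def b_def by (simp add: ms)
      also have "\<dots> = U ** csc \<i> (Ym - Yp) ** V" by (simp only: core flip: K_eq)
      also have "\<dots> = csc \<i> (b - a)" unfolding a_def b_def by (simp add: ms)
      finally show ?thesis .
    qed
    show ?thesis unfolding qv pv by (rule final_alg[OF hyp])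
  qed
  show ?thesis using main by (auto simp: Let_def)
qed


end
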